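(* Let $t\ge 0$ be an integer and consider any complete run of the exponential-edge chip-firing process starting with $2^{t+2}$ chips at site $0$. For $0\le k\le t$, site $k$ fires exactly $2$ more times than site $k+1$. Similarly, for $-t\le k\le 0$, site $k$ fires exactly $2$ more times than site $k-1$.
   Context: Exponential-edge graph with parameter $t$: the vertex set is $\mathbb{Z}$; for each $0\le k\le t$ there are $2^{t-k}$ parallel edges between $k$ and $k+1$ and $2^{t-k}$ parallel edges between $-k$ and $-k-1$; all other pairs of adjacent integers ($i,i+1$ with $i\ge t+1$ or $i+1\le -t-1$) are joined by a single edge. If a site has $a$ edges to its left neighbor and $b$ edges to its right neighbor, a firing move at that site chooses $a+b$ chips present there and sends the $a$ smallest of them to the left neighbor and the $b$ largest to the right neighbor (chips carry distinct labels from a totally ordered set). A complete run is a sequence of legal firing moves ending in a configuration where no firing move is possible. *)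

theory Defs
  imports Main
begin

text \<open>Number of parallel edges between sites i and i+1 in the exponential-edge
graph with parameter t.\<close>
definition edges :: "nat \<Rightarrow> int \<Rightarrow> nat" where
  "edges t i =
    (if 0 \<le> i \<and> i \<le> int t then 2 ^ nat (int t - i)
     else if - int t - 1 \<le> i \<and> i < 0 then 2 ^ nat (int t + 1 + i)
     else 1)"

definition ldeg :: "nat \<Rightarrow> int \<Rightarrow> nat" where
  "ldeg t v = edges t (v - 1)"

definition rdeg :: "nat \<Rightarrow> int \<Rightarrow> nat" where
  "rdeg t v = edges t v"

definition smallest :: "nat \<Rightarrow> 'a::linorder set \<Rightarrow> 'a set" where
  "smallest a S = {x \<in> S. card {y \<in> S. y < x} < a}"

definition largest :: "nat \<Rightarrow> 'a::linorder set \<Rightarrow> 'a set" where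
  "largest b S = {x \<in> S. card {y \<in> S. x < y} < b}"

text \<open>A configuration assigns to each site the set of (labels of) chips there.\<close>
type_synonym 'a config = "int \<Rightarrow> 'a set"

definition legal_move :: "nat \<Rightarrow> 'a config \<Rightarrow> int \<Rightarrow> 'a set \<Rightarrow> bool" where
  "legal_move t c v S \<longleftrightarrow> finite (c v) \<and> S \<subseteq> c v \<and> card S = ldeg t v + rdeg t v"

definition fire :: "nat \<Rightarrow> 'a::linorder config \<Rightarrow> int \<Rightarrow> 'a set \<Rightarrow> 'a config" where
  "fire t c v S =
     (c(v := c v - S))
       (v - 1 := c (v - 1) \<union> smallest (ldeg t v) S,
        v + 1 := c (v + 1) \<union> largest (rdeg t v) S)"

fun legal_run :: "nat \<Rightarrow> 'a::linorder config \<Rightarrow> (int \<times> 'a set) list \<Rightarrow> bool" where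
  "legal_run t c [] = True"
| "legal_run t c ((v, S) # ms) = (legal_move t c v S \<and> legal_run t (fire t c v S) ms)"

fun final_config :: "nat \<Rightarrow> 'a::linorder config \<Rightarrow> (int \<times> 'a set) list \<Rightarrow> 'a config" where
  "final_config t c [] = c"
| "final_config t c ((v, S) # ms) = final_config t (fire t c v S) ms"

definition stable :: "nat \<Rightarrow> 'a config \<Rightarrow> bool" where
  "stable t c \<longleftrightarrow> (\<forall>v. \<not> (\<exists>S. legal_move t c v S))"

definition complete_run :: "nat \<Rightarrow> 'a::linorder config \<Rightarrow> (int \<times> 'a set) list \<Rightarrow> bool" where
  "complete_run t c ms \<longleftrightarrow> legal_run t c ms \<and> stable t (final_config t c ms)"

definition fires :: "(int \<times> 'a set) list \<Rightarrow> int \<Rightarrow> nat" where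
  "fires ms v = length (filter (\<lambda>m. fst m = v) ms)"

end

theory Submission
  imports Defs
begin
lemma take_less:
  fixes xs :: "'a::linorder list"
  assumes s: "sorted_wrt (<) xs" and i: "i < length xs"
  shows "{y \<in> set xs. y < xs ! i} = set (take i xs)"
proof (intro set_eqI iffI)
  fix y assume "y \<in> {y \<in> set xs. y < xs ! i}"
  then obtain j where j: "j < length xs" "y = xs ! j" "xs ! j < xs ! i" by (auto simp: in_set_conv_nth)
  have "j < i"
  proof (rule ccontr)
    assume "\<not> j < i"
    then have "i = j \<or> i < j" by auto
    then show False using j s i by (auto dest: sorted_wrt_nth_less)
  qed
  then show "y \<in> set (take i xs)" using j by (auto simp: in_set_conv_nth)
next
  fix y assume "y \<in> set (take i xs)"
  then obtain j where j: "j < i" "y = xs ! j" using i by (auto simp: in_set_conv_nth)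
  then show "y \<in> {y \<in> set xs. y < xs ! i}" using s i by (auto dest: sorted_wrt_nth_less)
qed
lemma drop_gt:
  fixes xs :: "'a::linorder list"
  assumes s: "sorted_wrt (<) xs" and i: "i < length xs"
  shows "{y \<in> set xs. xs ! i < y} = set (drop (Suc i) xs)"
proof (intro set_eqI iffI)
  fix y assume "y \<in> {y \<in> set xs. xs ! i < y}"
  then obtain j where j: "j < length xs" "y = xs ! j" "xs ! i < xs ! j" by (auto simp: in_set_conv_nth)
  have "i < j"
  proof (rule ccontr)
    assume "\<not> i < j"
    then have "i = j \<or> j < i" by auto
    then show False using j s i by (auto dest: sorted_wrt_nth_less)
  qed
  then show "y \<in> set (drop (Suc i) xs)" using j 
    by (auto simp: in_set_conv_nth intro!: exI[of _ "j - Suc i"])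
next
  fix y assume "y \<in> set (drop (Suc i) xs)"
  then obtain j where j: "j + Suc i < length xs" "y = xs ! (j + Suc i)" by (auto simp: in_set_conv_nth less_diff_conv) (metis add.commute)
  then show "y \<in> {y \<in> set xs. xs ! i < y}" using s i sorted_wrt_nth_less[OF s, of i "j + Suc i"] by auto
qed

lemma smallest_eq:
  fixes S :: "'a::linorder set"
  assumes "finite S" "a \<le> card S"
  shows "smallest a S = set (take a (sorted_list_of_set S))"
proof -
  let ?xs = "sorted_list_of_set S"
  have s: "sorted_wrt (<) ?xs" using assms by simp
  have len: "length ?xs = card S" by simp
  have S: "set ?xs = S" using assms by simp
  have d: "distinct ?xs" by simp
  show ?thesis
  proof (intro set_eqI iffI)
    fix x assume xa: "x \<in> smallest a S"
    then have xS: "x \<in> S" and "card {y \<in> S. y < x} < a" unfolding smallest_def by blast+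
    moreover have "x \<in> set ?xs" using xS S by simp
    ultimately have "x \<in> set ?xs" "card {y \<in> S. y < x} < a" by blast+
    then obtain i where i: "i < length ?xs" "x = ?xs ! i" "card {y \<in> S. y < x} < a"
      by (auto simp: in_set_conv_nth)
    have "card {y \<in> S. y < x} = i" using take_less[OF s i(1)] i d S
      by (simp add: distinct_card min_def)
    then show "x \<in> set (take a ?xs)" using i by (auto simp: in_set_conv_nth)
  next
    fix x assume "x \<in> set (take a ?xs)"
    then obtain i where i: "i < a" "i < length ?xs" "x = ?xs ! i" by (auto simp: in_set_conv_nth)
    have "card {y \<in> S. y < x} = i" using take_less[OF s i(2)] i d S
      by (simp add: distinct_card min_def)
    moreover have "x \<in> S" using nth_mem[OF i(2)] i(3) S by simp
    ultimately show "x \<in> smallest a S" unfolding smallest_def using i(1) by auto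
  qed
qed

lemma largest_eq:
  fixes S :: "'a::linorder set"
  assumes "finite S" "b \<le> card S"
  shows "largest b S = set (drop (card S - b) (sorted_list_of_set S))"
proof -
  let ?xs = "sorted_list_of_set S"
  have s: "sorted_wrt (<) ?xs" using assms by simp
  have len: "length ?xs = card S" by simp
  have S: "set ?xs = S" using assms by simp
  have d: "distinct ?xs" by simp
  show ?thesis
  proof (intro set_eqI iffI)
    fix x assume xa: "x \<in> largest b S"
    then have xS: "x \<in> S" and "card {y \<in> S. x < y} < b" unfolding largest_def by blast+
    moreover have "x \<in> set ?xs" using xS S by simp
    ultimately have "x \<in> set ?xs" "card {y \<in> S. x < y} < b" by blast+
    then obtain i where i: "i < length ?xs" "x = ?xs ! i" "card {y \<in> S. x < y} < b"
      by (auto simp: in_set_conv_nth)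
    have "card {y \<in> S. x < y} = card S - Suc i" using drop_gt[OF s i(1)] i d S
      by (simp add: distinct_card)
    then show "x \<in> set (drop (card S - b) ?xs)" using i len
      by (auto simp: in_set_conv_nth intro!: exI[of _ "i - (card S - b)"])
  next
    fix x assume "x \<in> set (drop (card S - b) ?xs)"
    then obtain j where i: "j + (card S - b) < length ?xs" "x = ?xs ! (j + (card S - b))" 
      by (auto simp: in_set_conv_nth less_diff_conv) (metis add.commute)
    have "card {y \<in> S. x < y} = card S - Suc (j + (card S - b))" using drop_gt[OF s i(1)] i d S
      by (simp add: distinct_card)
    moreover have "x \<in> S" using nth_mem[OF i(1)] i(2) S by simp
    moreover have "card S - Suc (j + (card S - b)) < b" using i(1) assms len by linarith
    ultimately show "x \<in> largest b S" unfolding largest_def by auto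
  qed
qed

lemma split_props:
  fixes S :: "'a::linorder set"
  assumes "finite S" "card S = a + b"
  shows "smallest a S \<subseteq> S" "largest b S \<subseteq> S" "smallest a S \<inter> largest b S = {}"
    "card (smallest a S) = a" "card (largest b S) = b"
proof -
  let ?xs = "sorted_list_of_set S"
  have S: "set ?xs = S" using assms by simp
  have d: "distinct ?xs" by simp
  have len: "length ?xs = card S" by simp
  have e1: "smallest a S = set (take a ?xs)" using smallest_eq[of S a] assms by simp
  have e2: "largest b S = set (drop a ?xs)" using largest_eq[of S b] assms by simp
  show "smallest a S \<subseteq> S" "largest b S \<subseteq> S" using e1 e2 S
    by (metis set_take_subset, metis set_drop_subset)
  show "smallest a S \<inter> largest b S = {}" using e1 e2 d
    by (simp add: set_take_disj_set_drop_if_distinct)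
  show "card (smallest a S) = a" using e1 d len assms by (simp add: distinct_card)
  show "card (largest b S) = b" using e2 d len assms by (simp add: distinct_card)
qed
definition inv :: "'a config \<Rightarrow> bool" where
  "inv c \<longleftrightarrow> (\<forall>v. finite (c v)) \<and> (\<forall>v w. v \<noteq> w \<longrightarrow> c v \<inter> c w = {})"

definition cnt :: "'a config \<Rightarrow> int \<Rightarrow> int" where
  "cnt c w = int (card (c w))"

lemma rdeg_ldeg: "rdeg t (v - 1) = ldeg t v" "ldeg t (v + 1) = rdeg t v"
  by (simp_all add: ldeg_def rdeg_def)

lemma fire_props:
  fixes c :: "'a::linorder config"
  assumes I: "inv c" and M: "legal_move t c v S"
  shows "inv (fire t c v S)"
    "cnt (fire t c v S) w = cnt c w - (if w = v then int (ldeg t v + rdeg t v) else 0)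
        + (if w = v - 1 then int (ldeg t v) else 0) + (if w = v + 1 then int (rdeg t v) else 0)"
proof -
  let ?a = "ldeg t v" and ?b = "rdeg t v"
  let ?A = "smallest ?a S" and ?B = "largest ?b S"
  have fin: "\<And>u. finite (c u)" and dis: "\<And>u w. u \<noteq> w \<Longrightarrow> c u \<inter> c w = {}"
    using I unfolding inv_def by auto
  have SS: "S \<subseteq> c v" and cS: "card S = ?a + ?b" using M unfolding legal_move_def by auto
  have fS: "finite S" using SS fin finite_subset by blast
  note P = split_props[OF fS cS]
  have A: "?A \<subseteq> c v" "?B \<subseteq> c v" using P SS by auto
  have AB: "?A \<inter> ?B = {}" by (rule P(3))
  have fA: "finite ?A" "finite ?B" using A fin finite_subset by blast+
  have ne: "v - 1 \<noteq> v" "v + 1 \<noteq> v" "v - 1 \<noteq> v + 1" by auto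
  have d1: "c (v - 1) \<inter> c v = {}" "c (v + 1) \<inter> c v = {}" "c (v - 1) \<inter> c (v + 1) = {}"
    using dis ne by auto
  have f1: "fire t c v S (v - 1) = c (v - 1) \<union> ?A" unfolding fire_def using ne by simp
  have f2: "fire t c v S (v + 1) = c (v + 1) \<union> ?B" unfolding fire_def using ne by simp
  have f3: "fire t c v S v = c v - S" unfolding fire_def using ne by simp
  have f4: "\<And>w. w \<noteq> v \<Longrightarrow> w \<noteq> v - 1 \<Longrightarrow> w \<noteq> v + 1 \<Longrightarrow> fire t c v S w = c w"
    unfolding fire_def by simp
  show "inv (fire t c v S)"
    unfolding inv_def
  proof (intro conjI allI impI)
    fix u show "finite (fire t c v S u)" using fin fA f1 f2 f3 f4[of u] by (cases "u = v \<or> u = v - 1 \<or> u = v + 1") auto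
  next
    fix u w :: int assume uw: "u \<noteq> w"
    have K: "\<And>u x. x \<in> fire t c v S u \<Longrightarrow> (x \<in> c u \<and> x \<notin> S) \<or> (x \<in> ?A \<and> u = v - 1) \<or> (x \<in> ?B \<and> u = v + 1)"
    proof -
      fix u x assume x: "x \<in> fire t c v S u"
      show "(x \<in> c u \<and> x \<notin> S) \<or> (x \<in> ?A \<and> u = v - 1) \<or> (x \<in> ?B \<and> u = v + 1)"
      proof (cases "u = v - 1 \<or> u = v + 1 \<or> u = v")
        case True
        then consider "u = v - 1" | "u = v + 1" | "u = v" by blast
        then show ?thesis
        proof cases
          case 1 then show ?thesis using x f1 d1 SS by blast
        next
          case 2 then show ?thesis using x f2 d1 SS by blast
        next
          case 3 then show ?thesis using x f3 by blast
        qed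
      next
        case False
        then have "x \<in> c u" using x f4 by auto
        moreover have "x \<notin> S" using dis[of u v] False SS \<open>x \<in> c u\<close> by blast
        ultimately show ?thesis by blast
      qed
    qed
    show "fire t c v S u \<inter> fire t c v S w = {}"
    proof (rule ccontr)
      assume "fire t c v S u \<inter> fire t c v S w \<noteq> {}"
      then obtain x where "x \<in> fire t c v S u" "x \<in> fire t c v S w" by blast
      from K[OF this(1)] K[OF this(2)] show False
        using dis[OF uw] uw AB P(1,2) ne by blast
    qed
  qed
  show "cnt (fire t c v S) w = cnt c w - (if w = v then int (ldeg t v + rdeg t v) else 0)
        + (if w = v - 1 then int (ldeg t v) else 0) + (if w = v + 1 then int (rdeg t v) else 0)"
  proof -
    have c1: "card (c v - S) = card (c v) - card S" using SS fS by (simp add: card_Diff_subset)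
    have c2: "card S \<le> card (c v)" using SS fin card_mono by blast
    have c3: "card (c (v - 1) \<union> ?A) = card (c (v - 1)) + ?a"
      proof -
      have "c (v - 1) \<inter> ?A = {}" using A d1 by blast
      then show ?thesis using card_Un_disjoint[OF fin fA(1)] P(4) by simp
    qed
    have c4: "card (c (v + 1) \<union> ?B) = card (c (v + 1)) + ?b"
      proof -
      have "c (v + 1) \<inter> ?B = {}" using A d1 by blast
      then show ?thesis using card_Un_disjoint[OF fin fA(2)] P(5) by simp
    qed
    consider "w = v" | "w = v - 1" | "w = v + 1" | "w \<noteq> v \<and> w \<noteq> v - 1 \<and> w \<noteq> v + 1" by blast
    then show ?thesis
    proof cases
      case 1 then show ?thesis using f3 c1 c2 cS ne unfolding cnt_def by simp
    next
      case 2 then show ?thesis using f1 c3 ne unfolding cnt_def by simp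
    next
      case 3 then show ?thesis using f2 c4 ne unfolding cnt_def by simp
    next
      case 4 then show ?thesis using f4 unfolding cnt_def by simp
    qed
  qed
qed

lemma fires_cons: "fires ((v, S) # ms) w = (if v = w then 1 else 0) + fires ms w"
  by (simp add: fires_def)

lemma run_counts:
  fixes c :: "'a::linorder config"
  assumes "legal_run t c ms" "inv c"
  shows "inv (final_config t c ms) \<and> (\<forall>w. cnt (final_config t c ms) w = cnt c w
     - int (ldeg t w + rdeg t w) * int (fires ms w) + int (ldeg t w) * int (fires ms (w - 1))
     + int (rdeg t w) * int (fires ms (w + 1)))"
  using assms
proof (induction ms arbitrary: c)
  case Nil
  then show ?case by (simp add: fires_def)
next
  case (Cons m ms)
  obtain v S where m: "m = (v, S)" by fastforce
  have M: "legal_move t c v S" and R: "legal_run t (fire t c v S) ms" using Cons.prems m by auto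
  have I': "inv (fire t c v S)" using fire_props(1)[OF Cons.prems(2) M] .
  note IH = Cons.IH[OF R I']
  show ?case
  proof (intro conjI allI)
    show "inv (final_config t c (m # ms))" using IH m by simp
  next
    fix w
    have e: "cnt (fire t c v S) w = cnt c w - (if w = v then int (ldeg t v + rdeg t v) else 0)
        + (if w = v - 1 then int (ldeg t v) else 0) + (if w = v + 1 then int (rdeg t v) else 0)"
      using fire_props(2)[OF Cons.prems(2) M] .
    have H: "cnt (final_config t c (m # ms)) w = cnt (fire t c v S) w
     - int (ldeg t w + rdeg t w) * int (fires ms w) + int (ldeg t w) * int (fires ms (w - 1))
     + int (rdeg t w) * int (fires ms (w + 1))" using IH m by simp
    show "cnt (final_config t c (m # ms)) w = cnt c w
     - int (ldeg t w + rdeg t w) * int (fires (m # ms) w) + int (ldeg t w) * int (fires (m # ms) (w - 1))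
     + int (rdeg t w) * int (fires (m # ms) (w + 1))"
    proof -
      consider "w = v" | "w = v - 1" | "w = v + 1" | "w \<noteq> v \<and> w \<noteq> v - 1 \<and> w \<noteq> v + 1" by blast
      then show ?thesis
      proof cases
        case 1 then show ?thesis using H e by (simp add: m fires_cons algebra_simps)
      next
        case 2 then have "rdeg t w = ldeg t v" using rdeg_ldeg(1)[of t v] by simp
          with 2 show ?thesis using H e by (simp add: m fires_cons algebra_simps)
      next
        case 3 then have "ldeg t w = rdeg t v" using rdeg_ldeg(2)[of t v] by simp
          with 3 show ?thesis using H e by (simp add: m fires_cons algebra_simps)
      next
        case 4 then show ?thesis using H e by (simp add: m fires_cons algebra_simps)
      qed
    qed
  qed
qed

lemma least_action:
  fixes c :: "'a::linorder config"
  assumes "legal_run t c ms" "inv c" "\<forall>w. 0 \<le> u w"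
    "\<forall>w. cnt c w + int (ldeg t w) * (u (w - 1) - u w) + int (rdeg t w) * (u (w + 1) - u w)
          < int (ldeg t w) + int (rdeg t w)"
  shows "int (fires ms w) \<le> u w"
  using assms
proof (induction ms arbitrary: c u)
  case Nil
  then show ?case by (simp add: fires_def)
next
  case (Cons m ms)
  obtain v S where m: "m = (v, S)" by fastforce
  have M: "legal_move t c v S" and R: "legal_run t (fire t c v S) ms" using Cons.prems m by auto
  have I': "inv (fire t c v S)" using fire_props(1)[OF Cons.prems(2) M] .
  have "card S \<le> card (c v)" using M unfolding legal_move_def by (meson card_mono)
  then have big: "cnt c v \<ge> int (ldeg t v) + int (rdeg t v)" using M unfolding legal_move_def cnt_def by simp
  have uv: "u v \<ge> 1"
  proof (rule ccontr)
    assume "\<not> u v \<ge> 1"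
    then have "u v = 0" using Cons.prems(3) by (metis int_one_le_iff_zero_less linorder_not_less order_le_less)
    moreover have "0 \<le> int (ldeg t v) * u (v - 1)" "0 \<le> int (rdeg t v) * u (v + 1)"
      using Cons.prems(3) by auto
    ultimately show False using Cons.prems(4) big by (smt (verit))
  qed
  define u' where "u' = u(v := u v - 1)"
  have u'0: "\<forall>w. 0 \<le> u' w" using uv Cons.prems(3) by (simp add: u'_def)
  have u'st: "\<forall>w. cnt (fire t c v S) w + int (ldeg t w) * (u' (w - 1) - u' w) + int (rdeg t w) * (u' (w + 1) - u' w)
          < int (ldeg t w) + int (rdeg t w)"
  proof
    fix w
    have e: "cnt (fire t c v S) w = cnt c w - (if w = v then int (ldeg t v + rdeg t v) else 0)
        + (if w = v - 1 then int (ldeg t v) else 0) + (if w = v + 1 then int (rdeg t v) else 0)"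
      using fire_props(2)[OF Cons.prems(2) M] .
    have q: "cnt (fire t c v S) w + int (ldeg t w) * (u' (w - 1) - u' w) + int (rdeg t w) * (u' (w + 1) - u' w)
        = cnt c w + int (ldeg t w) * (u (w - 1) - u w) + int (rdeg t w) * (u (w + 1) - u w)"
    proof -
      consider "w = v" | "w = v - 1" | "w = v + 1" | "w \<noteq> v \<and> w \<noteq> v - 1 \<and> w \<noteq> v + 1" by blast
      then show ?thesis
      proof cases
        case 1 then show ?thesis using e by (simp add: u'_def algebra_simps)
      next
        case 2 then have "rdeg t w = ldeg t v" using rdeg_ldeg(1)[of t v] by simp
          with 2 show ?thesis using e by (simp add: u'_def algebra_simps)
      next
        case 3 then have "ldeg t w = rdeg t v" using rdeg_ldeg(2)[of t v] by simp
          with 3 show ?thesis using e by (simp add: u'_def algebra_simps)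
      next
        case 4 then show ?thesis using e by (simp add: u'_def algebra_simps)
      qed
    qed
    show "cnt (fire t c v S) w + int (ldeg t w) * (u' (w - 1) - u' w) + int (rdeg t w) * (u' (w + 1) - u' w)
          < int (ldeg t w) + int (rdeg t w)" unfolding q using Cons.prems(4) by blast
  qed
  have "int (fires ms w) \<le> u' w" using Cons.IH[OF R I' u'0 u'st] .
  then show ?case unfolding m fires_cons u'_def by auto
qed


definition us :: "nat \<Rightarrow> int \<Rightarrow> int" where
  "us t v = (if \<bar>v\<bar> \<le> int t + 1 then 2 * (int t + 1 - \<bar>v\<bar>) + 1 else 0)"

lemma edges_pos: "0 \<le> i \<Longrightarrow> i \<le> int t \<Longrightarrow> edges t i = 2 ^ nat (int t - i)"
  by (simp add: edges_def)
lemma edges_neg: "- int t - 1 \<le> i \<Longrightarrow> i < 0 \<Longrightarrow> edges t i = 2 ^ nat (int t + 1 + i)"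
  by (simp add: edges_def)
lemma edges_out: "i > int t \<or> i < - int t - 1 \<Longrightarrow> edges t i = 1"
  by (auto simp add: edges_def)

lemma reg_pos:
  assumes "1 \<le> w" "w \<le> int t"
  shows "int (ldeg t w) = 2 * 2 ^ nat (int t - w)" "int (rdeg t w) = 2 ^ nat (int t - w)"
    "us t (w - 1) - us t w = 2" "us t (w + 1) - us t w = -2"
proof -
  have "nat (int t - (w - 1)) = Suc (nat (int t - w))" using assms by simp
  then show "int (ldeg t w) = 2 * 2 ^ nat (int t - w)" using assms
    by (simp add: ldeg_def edges_pos)
  show "int (rdeg t w) = 2 ^ nat (int t - w)" using assms by (simp add: rdeg_def edges_pos)
  show "us t (w - 1) - us t w = 2" "us t (w + 1) - us t w = -2" using assms by (simp_all add: us_def)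
qed

lemma reg_neg:
  assumes "- int t \<le> w" "w \<le> -1"
  shows "int (ldeg t w) = 2 ^ nat (int t + w)" "int (rdeg t w) = 2 * 2 ^ nat (int t + w)"
    "us t (w - 1) - us t w = -2" "us t (w + 1) - us t w = 2"
proof -
  have "nat (int t + 1 + w) = Suc (nat (int t + w))" using assms by simp
  then show "int (rdeg t w) = 2 * 2 ^ nat (int t + w)" using assms
    by (simp add: rdeg_def edges_neg)
  have "nat (int t + 1 + (w - 1)) = nat (int t + w)" by simp
  then show "int (ldeg t w) = 2 ^ nat (int t + w)" using assms by (simp add: ldeg_def edges_neg)
  show "us t (w - 1) - us t w = -2" "us t (w + 1) - us t w = 2" using assms by (simp_all add: us_def)
qed

lemma reg_zero:
  "int (ldeg t 0) = 2 ^ t" "int (rdeg t 0) = 2 ^ t" "us t (0 - 1) - us t 0 = -2" "us t (0 + 1) - us t 0 = -2"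
  by (simp_all add: ldeg_def rdeg_def edges_def us_def)

lemma reg_t1:
  "int (ldeg t (int t + 1)) = 1" "int (rdeg t (int t + 1)) = 1"
  "us t (int t + 1 - 1) - us t (int t + 1) = 2" "us t (int t + 1 + 1) - us t (int t + 1) = -1"
  by (simp_all add: ldeg_def rdeg_def edges_def us_def)

lemma reg_mt1:
  "int (ldeg t (- int t - 1)) = 1" "int (rdeg t (- int t - 1)) = 1"
  "us t (- int t - 1 - 1) - us t (- int t - 1) = -1" "us t (- int t - 1 + 1) - us t (- int t - 1) = 2"
  by (simp_all add: ldeg_def rdeg_def edges_def us_def)

lemma reg_t2:
  "int (ldeg t (int t + 2)) = 1" "int (rdeg t (int t + 2)) = 1"
  "us t (int t + 2 - 1) - us t (int t + 2) = 1" "us t (int t + 2 + 1) - us t (int t + 2) = 0"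
  by (simp_all add: ldeg_def rdeg_def edges_def us_def)

lemma reg_mt2:
  "int (ldeg t (- int t - 2)) = 1" "int (rdeg t (- int t - 2)) = 1"
  "us t (- int t - 2 - 1) - us t (- int t - 2) = 0" "us t (- int t - 2 + 1) - us t (- int t - 2) = 1"
  by (simp_all add: ldeg_def rdeg_def edges_def us_def)

lemma reg_far:
  assumes "\<bar>w\<bar> \<ge> int t + 3"
  shows "int (ldeg t w) = 1" "int (rdeg t w) = 1"
  "us t (w - 1) - us t w = 0" "us t (w + 1) - us t w = 0"
  using assms by (auto simp add: ldeg_def rdeg_def edges_def us_def)

lemma base_check:
  "(if w = 0 then 2 ^ (t + 2) else 0) + int (ldeg t w) * (us t (w - 1) - us t w)
     + int (rdeg t w) * (us t (w + 1) - us t w) < int (ldeg t w) + int (rdeg t w)"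
proof -
  consider "\<bar>w\<bar> \<ge> int t + 3" | "w = int t + 2" | "w = - int t - 2" | "w = int t + 1" | "w = - int t - 1"
    | "1 \<le> w \<and> w \<le> int t" | "- int t \<le> w \<and> w \<le> -1" | "w = 0" by linarith
  then show ?thesis
  proof cases
    case 1 then have "w \<noteq> 0" by auto
    then show ?thesis using reg_far[OF 1] by simp
  next
    case 2 then show ?thesis using reg_t2[of t] by simp
  next
    case 3 then show ?thesis using reg_mt2[of t] by simp
  next
    case 4 then show ?thesis using reg_t1[of t] by simp
  next
    case 5 then show ?thesis using reg_mt1[of t] by simp
  next
    case 6 then show ?thesis using reg_pos[of w t] by simp
  next
    case 7 then show ?thesis using reg_neg[of t w] by simp
  next
    case 8 then show ?thesis using reg_zero[of t] by (simp add: power_add)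
  qed
qed

lemma chain:
  fixes P :: "nat \<Rightarrow> int"
  assumes nn: "\<And>k. 0 \<le> P k"
    and R1: "\<And>k. 1 \<le> k \<Longrightarrow> k \<le> t \<Longrightarrow> 3 * P k \<le> 2 * P (k - 1) + P (k + 1)"
    and R2: "2 * P (t + 1) \<le> P t"
  shows "\<And>k. 1 \<le> k \<Longrightarrow> k \<le> t + 1 \<Longrightarrow> P k \<le> P (k - 1)"
    and "P 1 = P 0 \<Longrightarrow> k \<le> t + 1 \<Longrightarrow> P k = 0"
proof -
  have M: "j \<le> t \<Longrightarrow> P (t + 1 - j) \<le> P (t - j)" for j
  proof (induction j)
    case 0 then show ?case using R2 nn[of "t+1"] by simp
  next
    case (Suc j)
    define k where "k = t - j"
    have k: "1 \<le> k" "k \<le> t" "t + 1 - j = k + 1" "t - Suc j = k - 1" "t + 1 - Suc j = k"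
      using Suc.prems by (auto simp: k_def)
    have "P (k + 1) \<le> P k" using Suc k by simp
    then have "P k \<le> P (k - 1)" using R1[OF k(1,2)] by linarith
    then show ?case using k by simp
  qed
  show mono: "\<And>k. 1 \<le> k \<Longrightarrow> k \<le> t + 1 \<Longrightarrow> P k \<le> P (k - 1)"
  proof -
    fix k :: nat assume "1 \<le> k" "k \<le> t + 1"
    then show "P k \<le> P (k - 1)" using M[of "t + 1 - k"] by simp
  qed
  assume P10: "P 1 = P 0"
  have E: "k \<le> t + 1 \<Longrightarrow> P k = P 0 \<and> P (k - 1) = P 0" for k
  proof (induction k)
    case 0 then show ?case by simp
  next
    case (Suc k)
    then have IH: "P k = P 0" "P (k - 1) = P 0" by auto
    show ?case
    proof (cases "k = 0")
      case True then show ?thesis using P10 by simp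
    next
      case False
      then have "1 \<le> k" "k \<le> t" using Suc.prems by auto
      have "P (k + 1) \<le> P k" using mono[of "k + 1"] Suc.prems by simp
      moreover have "3 * P k \<le> 2 * P (k - 1) + P (k + 1)" using R1 \<open>1 \<le> k\<close> \<open>k \<le> t\<close> by blast
      ultimately show ?thesis using IH by simp
    qed
  qed
  have "P (t + 1) = P 0" "P t = P 0" using E[of "t + 1"] by auto
  then have "P 0 = 0" using R2 nn[of "t+1"] by linarith
  then show "k \<le> t + 1 \<Longrightarrow> P k = 0" using E[of k] by simp
qed

theorem lemma3p4:
  fixes t :: nat and X :: "'a::linorder set" and ms :: "(int \<times> 'a set) list"
  assumes "finite X" and "card X = 2 ^ (t + 2)"
    and "complete_run t (\<lambda>v. if v = 0 then X else {}) ms"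
  shows "(\<forall>k. 0 \<le> k \<and> k \<le> int t \<longrightarrow> fires ms k = fires ms (k + 1) + 2)
       \<and> (\<forall>k. - int t \<le> k \<and> k \<le> 0 \<longrightarrow> fires ms k = fires ms (k - 1) + 2)"
proof -
  define c0 :: "'a config" where "c0 = (\<lambda>v. if v = 0 then X else {})"
  have I0: "inv c0" unfolding inv_def c0_def using assms(1) by auto
  have LR: "legal_run t c0 ms" and ST: "stable t (final_config t c0 ms)"
    using assms(3) unfolding complete_run_def c0_def by auto
  note RC = run_counts[OF LR I0]
  define fc where "fc = final_config t c0 ms"
  define F where "F w = int (fires ms w)" for w
  define p where "p w = us t w - F w" for w
  have sig: "cnt c0 w = (if w = 0 then 2 ^ (t + 2) else 0)" for w
    using assms(2) unfolding cnt_def c0_def by simp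
  have stab: "cnt fc w < int (ldeg t w) + int (rdeg t w)" for w
  proof (rule ccontr)
    assume "\<not> ?thesis"
    then have "ldeg t w + rdeg t w \<le> card (fc w)" unfolding cnt_def by simp
    moreover have fw: "finite (fc w)" using RC unfolding inv_def fc_def by blast
    ultimately obtain S where "S \<subseteq> fc w" "card S = ldeg t w + rdeg t w"
      using obtain_subset_with_card_n by metis
    then have "legal_move t fc w S" unfolding legal_move_def using fw by simp
    then show False using ST unfolding stable_def fc_def by blast
  qed
  have us0: "\<forall>w. 0 \<le> us t w" by (simp add: us_def)
  have bc: "\<forall>w. cnt c0 w + int (ldeg t w) * (us t (w - 1) - us t w) + int (rdeg t w) * (us t (w + 1) - us t w)
          < int (ldeg t w) + int (rdeg t w)" using base_check sig by simp
  have LA: "F w \<le> us t w" for w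
    unfolding F_def using least_action[OF LR I0 us0 bc] .
  have pnn: "0 \<le> p w" for w using LA[of w] by (simp add: p_def)
  have pout: "int t + 2 \<le> \<bar>w\<bar> \<Longrightarrow> p w = 0" for w
    using pnn[of w] unfolding p_def F_def us_def by simp
  have ident: "cnt fc w = ((if w = 0 then 2 ^ (t + 2) else 0) + int (ldeg t w) * (us t (w - 1) - us t w)
      + int (rdeg t w) * (us t (w + 1) - us t w))
      + int (ldeg t w) * (p w - p (w - 1)) + int (rdeg t w) * (p w - p (w + 1))" for w
    using RC sig unfolding fc_def p_def F_def by (simp add: algebra_simps)
  have R1p: "3 * p w \<le> 2 * p (w - 1) + p (w + 1)" if a: "1 \<le> w" "w \<le> int t" for w
  proof -
    define x :: int where "x = 2 ^ nat (int t - w)"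
    have xp: "x > 0" unfolding x_def by simp
    note r = reg_pos[OF a]
    have w0: "w \<noteq> 0" using a by simp
    have "cnt fc w = (if w = 0 then 2 ^ (t + 2) else 0) + (2 * x) * 2 + x * (-2)
      + (2 * x) * (p w - p (w - 1)) + x * (p w - p (w + 1))"
      unfolding ident[of w] r x_def by simp
    then have "cnt fc w = x * (2 + 2 * (p w - p (w - 1)) + (p w - p (w + 1)))"
      using w0 by (simp add: algebra_simps)
    moreover have "cnt fc w < x * 3" using stab[of w] r unfolding x_def[symmetric] by simp
    ultimately have "x * (2 + 2 * (p w - p (w - 1)) + (p w - p (w + 1))) < x * 3" by simp
    then have "2 + 2 * (p w - p (w - 1)) + (p w - p (w + 1)) < 3"
      using mult_less_cancel_left_pos[OF xp] by blast
    then show ?thesis by (smt (verit))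
  qed
  have R1n: "3 * p w \<le> p (w - 1) + 2 * p (w + 1)" if a: "- int t \<le> w" "w \<le> -1" for w
  proof -
    define x :: int where "x = 2 ^ nat (int t + w)"
    have xp: "x > 0" unfolding x_def by simp
    note r = reg_neg[OF a]
    have w0: "w \<noteq> 0" using a by simp
    have "cnt fc w = (if w = 0 then 2 ^ (t + 2) else 0) + x * (-2) + (2 * x) * 2
      + x * (p w - p (w - 1)) + (2 * x) * (p w - p (w + 1))"
      unfolding ident[of w] r x_def by simp
    then have "cnt fc w = x * (2 + (p w - p (w - 1)) + 2 * (p w - p (w + 1)))"
      using w0 by (simp add: algebra_simps)
    moreover have "cnt fc w < x * 3" using stab[of w] r unfolding x_def[symmetric] by simp
    ultimately have "x * (2 + (p w - p (w - 1)) + 2 * (p w - p (w + 1))) < x * 3" by simp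
    then have "2 + (p w - p (w - 1)) + 2 * (p w - p (w + 1)) < 3"
      using mult_less_cancel_left_pos[OF xp] by blast
    then show ?thesis by (smt (verit))
  qed
  have R2p: "2 * p (int t + 1) \<le> p (int t)"
  proof -
    have "cnt fc (int t + 1) = 1 + (p (int t + 1) - p (int t)) + (p (int t + 1) - p (int t + 2))"
      unfolding ident[of "int t + 1"] reg_t1[of t] by (simp add: add.commute)
    moreover have "cnt fc (int t + 1) < 2" using stab[of "int t + 1"] reg_t1[of t] by simp
    moreover have "p (int t + 2) = 0" using pout by simp
    ultimately show ?thesis by linarith
  qed
  have R2n: "2 * p (- int t - 1) \<le> p (- int t)"
  proof -
    have "cnt fc (- int t - 1) = 1 + (p (- int t - 1) - p (- int t - 2)) + (p (- int t - 1) - p (- int t))"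
      unfolding ident[of "- int t - 1"] reg_mt1[of t] by (simp add: algebra_simps)
    moreover have "cnt fc (- int t - 1) < 2" using stab[of "- int t - 1"] reg_mt1[of t] by simp
    moreover have "p (- int t - 2) = 0" using pout by simp
    ultimately show ?thesis by linarith
  qed
  have Z: "2 * p 0 - p (-1) - p 1 \<le> 1"
  proof -
    define x :: int where "x = 2 ^ t"
    have xp: "x > 0" unfolding x_def by simp
    have "cnt fc 0 = x * (2 * p 0 - p (-1) - p 1)"
      unfolding ident[of 0] reg_zero[of t] unfolding x_def by (simp add: algebra_simps power_add)
    moreover have "cnt fc 0 < x * 2" using stab[of 0] reg_zero[of t] unfolding x_def by simp
    ultimately have "x * (2 * p 0 - p (-1) - p 1) < x * 2" by simp
    then have "2 * p 0 - p (-1) - p 1 < 2" using mult_less_cancel_left_pos[OF xp] by blast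
    then show ?thesis by linarith
  qed
  define P where "P k = p (int k)" for k
  define Q where "Q k = p (- int k)" for k
  have PR1: "3 * P k \<le> 2 * P (k - 1) + P (k + 1)" if "1 \<le> k" "k \<le> t" for k
    using R1p[of "int k"] that unfolding P_def by (simp add: of_nat_diff add.commute)
  have QR1: "3 * Q k \<le> 2 * Q (k - 1) + Q (k + 1)" if "1 \<le> k" "k \<le> t" for k
  proof -
    have "3 * p (- int k) \<le> p (- int k - 1) + 2 * p (- int k + 1)" using R1n[of "- int k"] that by simp
    moreover have "- int (k - 1) = - int k + 1" "- int (k + 1) = - int k - 1" using that by auto
    then have "Q (k - 1) = p (- int k + 1)" "Q (k + 1) = p (- int k - 1)" unfolding Q_def by metis+
    ultimately show ?thesis unfolding Q_def by linarith
  qed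
  have PR2: "2 * P (t + 1) \<le> P t" using R2p unfolding P_def by (simp add: add.commute)
  have QR2: "2 * Q (t + 1) \<le> Q t"
  proof -
    have "- int (t + 1) = - int t - 1" by simp
    then show ?thesis using R2n unfolding Q_def by metis
  qed
  have Pnn: "\<And>k. 0 \<le> P k" and Qnn: "\<And>k. 0 \<le> Q k" unfolding P_def Q_def using pnn by auto
  note CP = chain[of P t, OF Pnn PR1 PR2] and CQ = chain[of Q t, OF Qnn QR1 QR2]
  have PQ0: "Q 0 = P 0" unfolding P_def Q_def by simp
  have P1: "P 1 \<le> P 0" using CP(1)[of 1] by simp
  have Q1: "Q 1 \<le> Q 0" using CQ(1)[of 1] by simp
  have Z': "2 * P 0 - Q 1 - P 1 \<le> 1" using Z unfolding P_def Q_def by simp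
  have allz: "P k = 0 \<and> Q k = 0" if k: "k \<le> t + 1" for k
  proof (cases "P 1 = P 0")
    case True
    then have Pz: "\<And>k. k \<le> t + 1 \<Longrightarrow> P k = 0" using CP(2) by blast
    then have "Q 1 = Q 0" using PQ0 Q1 Qnn[of 1] by (metis le_add2 order_antisym zero_le)
    then have "Q k = 0" using CQ(2) k by blast
    then show ?thesis using Pz k by blast
  next
    case False
    then have "Q 1 = Q 0" using P1 Q1 Z' PQ0 by linarith
    then have Qz: "\<And>k. k \<le> t + 1 \<Longrightarrow> Q k = 0" using CQ(2) by blast
    then have "P 1 = P 0" using PQ0 P1 Pnn[of 1] by (metis le_add2 order_antisym zero_le)
    then have "P k = 0" using CP(2) k by blast
    then show ?thesis using Qz k by blast
  qed
  have Feq: "F w = us t w" if "\<bar>w\<bar> \<le> int t + 1" for w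
  proof (cases "0 \<le> w")
    case True
    then have "P (nat w) = 0" using allz[of "nat w"] that by simp
    then show ?thesis using True unfolding P_def p_def by simp
  next
    case False
    then have "Q (nat (- w)) = 0" using allz[of "nat (- w)"] that by simp
    then show ?thesis using False unfolding Q_def p_def by simp
  qed
  show ?thesis
  proof (intro conjI allI impI)
    fix k :: int assume k: "0 \<le> k \<and> k \<le> int t"
    have "F k = us t k" "F (k + 1) = us t (k + 1)" using Feq k by auto
    then have "F k = F (k + 1) + 2" using k unfolding us_def by simp
    then show "fires ms k = fires ms (k + 1) + 2" unfolding F_def by simp
  next
    fix k :: int assume k: "- int t \<le> k \<and> k \<le> 0"
    have "F k = us t k" "F (k - 1) = us t (k - 1)" using Feq k by auto
    then have "F k = F (k - 1) + 2" using k unfolding us_def by simp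
    then show "fires ms k = fires ms (k - 1) + 2" unfolding F_def by simp
  qed
qed

end
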